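(* Let $n\ge 2$ and let $K \subset \mathbb{R}^n$ be a compact convex set with nonempty interior. Then there exists $x^0 \in K$ such that $$\int_{K - x^0} \frac{y}{|y|^n}\,dy = 0,$$ where $K - x^0 = \{y - x^0 : y \in K\}$.
   Context: The integrand $y/|y|^n$ is locally integrable on $\mathbb{R}^n$, so the integral is well defined. *)

theory Defs
  imports "HOL-Analysis.Analysis"
begin

end

theory Submission
  imports Defs "HOL-Analysis.Analysis"
begin

lemma shell_exists:
  fixes t R :: real
  assumes "0 < t" "t \<le> R"
  shows "\<exists>k::nat. R / 2^(k+1) < t \<and> t \<le> R / 2^k"
proof (rule ccontr)
  assume H: "\<not> ?thesis"
  have all: "t \<le> R / 2^k" for k
  proof (induction k)
    case 0 then show ?case using assms by simp
  next
    case (Suc k) then show ?case using H by (metis not_less Suc_eq_plus1)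
  qed
  have "R > 0" using assms by linarith
  obtain k::nat where "R / t < 2^k" using real_arch_pow[of 2 "R/t"] by auto
  then have "R < 2^k * t" using assms by (simp add: divide_less_eq mult.commute)
  moreover have "t * 2^k \<le> R" using all[of k] by (simp add: le_divide_eq)
  ultimately show False by (simp add: mult.commute)
qed

lemma leb_meas: "f \<in> borel_measurable borel \<Longrightarrow> (f::'a::euclidean_space \<Rightarrow> 'b::topological_space) \<in> borel_measurable lebesgue"
  by (rule measurable_completion) simp

lemma meas_gb: "(\<lambda>y::'a::euclidean_space. (1 / norm y ^ DIM('a)) *\<^sub>R y) \<in> borel_measurable borel"
  by measurable

lemma meas_g2: "closed K \<Longrightarrow> (\<lambda>y::'a::euclidean_space. indicator K (y + x) *\<^sub>R ((1 / norm y ^ DIM('a)) *\<^sub>R y)) \<in> borel_measurable lebesgue"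
  apply (rule leb_meas)
  apply (rule borel_measurable_scaleR[OF _ meas_gb])
  apply (rule measurable_compose[of "\<lambda>y. y + x" _ borel, OF _ borel_measurable_indicator])
  by (auto intro: borel_closed)

lemma locint:
  fixes R :: real
  assumes R: "R > 0"
  shows "integrable lebesgue (\<lambda>y::'a::euclidean_space. indicator (cball 0 R) y *\<^sub>R ((1 / norm y ^ DIM('a)) *\<^sub>R y))"
proof -
  define N where "N = DIM('a)"
  obtain M where NM: "N = Suc M" using DIM_positive N_def by (metis Suc_pred)
  define d where "d j = (2^(j+1)/R)^M" for j :: nat
  define V where "V = unit_ball_vol (real N)"
  have V: "V \<ge> 0" by (simp add: V_def)
  let ?f = "\<lambda>y::'a. indicator (cball 0 R) y *\<^sub>R ((1 / norm y ^ DIM('a)) *\<^sub>R y)"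
  have meas: "?f \<in> borel_measurable lebesgue"
    using meas_g2[of "cball 0 R" 0] by simp
  have pw: "ennreal (norm (?f y)) \<le> (\<Sum>j. ennreal (d j) * indicator (cball 0 (R/2^j)) y)" for y
  proof (cases "y = 0 \<or> norm y > R")
    case True then show ?thesis by (auto simp: indicator_def)
  next
    case False
    then have y0: "norm y > 0" and yR: "norm y \<le> R" by auto
    obtain k where k1: "R / 2^(k+1) < norm y" and k2: "norm y \<le> R / 2^k"
      using shell_exists[OF y0 yR] by auto
    have "norm (?f y) = norm y / norm y ^ N" using yR by (simp add: N_def)
    also have "\<dots> = (1 / norm y) ^ M" using y0 NM by (simp add: power_divide field_simps)
    also have "\<dots> \<le> d k" unfolding d_def
    proof (rule power_mono)
      show "1 / norm y \<le> 2 ^ (k + 1) / R"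
        using k1 y0 R by (simp add: field_simps)
    qed (simp)
    finally have "ennreal (norm (?f y)) \<le> ennreal (d k) * indicator (cball 0 (R/2^k)) y"
      using k2 by (simp add: indicator_def ennreal_leI)
    also have "\<dots> \<le> (\<Sum>j. ennreal (d j) * indicator (cball 0 (R/2^j)) y)"
      using sum_le_suminf[of "\<lambda>j. ennreal (d j) * indicator (cball 0 (R/2^j)) y" "{k}"]
      by (simp only: sum.insert sum.empty finite.emptyI finite.insertI empty_iff add_0_right summableI zero_le simp_thms)
    finally show ?thesis .
  qed
  have "(\<integral>\<^sup>+y. ennreal (norm (?f y)) \<partial>lebesgue) = (\<integral>\<^sup>+y. ennreal (norm (?f y)) \<partial>lborel)"
    by (rule nn_integral_completion)
  also have "\<dots> \<le> (\<integral>\<^sup>+y. (\<Sum>j. ennreal (d j) * indicator (cball (0::'a) (R/2^j)) y) \<partial>lborel)"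
    by (intro nn_integral_mono pw)
  also have "\<dots> = (\<Sum>j. \<integral>\<^sup>+y. ennreal (d j) * indicator (cball (0::'a) (R/2^j)) y \<partial>lborel)"
    by (rule nn_integral_suminf) (intro borel_measurable_times_ennreal borel_measurable_const borel_measurable_indicator, simp add: borel_closed)
  also have "\<dots> = (\<Sum>j. ennreal (d j) * emeasure lborel (cball (0::'a) (R/2^j)))"
    by (subst nn_integral_cmult_indicator) auto
  also have "\<dots> = (\<Sum>j. ennreal (2^M * R * V * (1/2)^j))"
  proof (rule suminf_cong)
    fix j :: nat
    have "d j * (V * (R / 2^j) ^ N) = V * ((2^(j+1)/R * (R/2^j))^M * (R/2^j))"
      unfolding d_def NM by (simp add: power_mult_distrib[symmetric] mult_ac)
    also have "\<dots> = 2^M * R * V * (1/2)^j"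
      using R by (simp add: field_simps)
    finally have e: "d j * (V * (R / 2^j) ^ N) = 2^M * R * V * (1/2)^j" .
    have "d j \<ge> 0" unfolding d_def using R by simp
    then show "ennreal (d j) * emeasure lborel (cball (0::'a) (R/2^j)) = ennreal (2^M * R * V * (1/2)^j)"
      using R V by (simp add: emeasure_cball V_def N_def ennreal_mult'[symmetric] e[unfolded V_def N_def])
  qed
  also have "\<dots> = ennreal (\<Sum>j. 2^M * R * V * (1/2)^j)"
    using R V by (intro suminf_ennreal2) (auto intro!: summable_mult summable_geometric)
  also have "\<dots> < \<infinity>" by simp
  finally show ?thesis using meas by (simp add: integrable_iff_bounded)
qed

lemma dom_bound:
  fixes K :: "'a::euclidean_space set"
  assumes "K \<subseteq> cball 0 B" "x \<in> K"
  shows "norm (indicator K (y + x) *\<^sub>R ((1 / norm y ^ DIM('a)) *\<^sub>R y))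
         \<le> norm (indicator (cball 0 (2*B)) y *\<^sub>R ((1 / norm y ^ DIM('a)) *\<^sub>R y))"
proof (cases "y + x \<in> K")
  case True
  then have "norm (y + x) \<le> B" "norm x \<le> B" using assms by auto
  then have "norm y \<le> 2*B" using norm_triangle_ineq4[of "y + x" x] by simp
  then show ?thesis using True by (simp add: indicator_def)
qed (simp add: indicator_def)

lemma int_shift:
  fixes K :: "'a::euclidean_space set"
  assumes "compact K" "x \<in> K"
  shows "integrable lebesgue (\<lambda>y. indicator K (y + x) *\<^sub>R ((1 / norm y ^ DIM('a)) *\<^sub>R y))"
proof -
  obtain B where B: "B > 0" "K \<subseteq> cball 0 B"
    using compact_imp_bounded[OF assms(1)] bounded_subset_cball by (metis bounded_pos mem_cball_0 subsetI)
  have "integrable lebesgue (\<lambda>y::'a. indicator (cball 0 (2*B)) y *\<^sub>R ((1 / norm y ^ DIM('a)) *\<^sub>R y))"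
    using B by (intro locint) simp
  then show ?thesis
  proof (rule Bochner_Integration.integrable_bound)
    show "(\<lambda>y. indicator K (y + x) *\<^sub>R ((1 / norm y ^ DIM('a)) *\<^sub>R y)) \<in> borel_measurable lebesgue"
      using assms by (intro meas_g2 compact_imp_closed)
    show "AE y in lebesgue. norm (indicator K (y + x) *\<^sub>R ((1 / norm y ^ DIM('a)) *\<^sub>R y))
         \<le> norm (indicator (cball 0 (2*B)) y *\<^sub>R ((1 / norm y ^ DIM('a)) *\<^sub>R y))"
      using B assms by (intro AE_I2 dom_bound)
  qed
qed

lemma contF:
  fixes K :: "'a::euclidean_space set"
  assumes "compact K" "convex K"
  shows "continuous_on K (\<lambda>x. integral\<^sup>L lebesgue (\<lambda>y. indicator K (y + x) *\<^sub>R ((1 / norm y ^ DIM('a)) *\<^sub>R y)))"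
proof -
  have cl: "closed K" using assms compact_imp_closed by auto
  obtain B where B: "B > 0" "K \<subseteq> cball 0 B"
    using compact_imp_bounded[OF assms(1)] bounded_subset_cball by (metis bounded_pos mem_cball_0 subsetI)
  show ?thesis
  unfolding continuous_on_sequentially
  proof (intro allI ballI impI, elim conjE)
    fix s :: "nat \<Rightarrow> 'a" and a
    assume a: "a \<in> K" assume sK: "\<forall>n. s n \<in> K" and lim: "s \<longlonglongrightarrow> a"
    let ?g = "\<lambda>y::'a. (1 / norm y ^ DIM('a)) *\<^sub>R y"
    show "((\<lambda>x. integral\<^sup>L lebesgue (\<lambda>y. indicator K (y + x) *\<^sub>R ?g y)) \<circ> s) \<longlonglongrightarrow>
          integral\<^sup>L lebesgue (\<lambda>y. indicator K (y + a) *\<^sub>R ?g y)"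
      unfolding o_def
    proof (rule integral_dominated_convergence[where w = "\<lambda>y. norm (indicator (cball 0 (2*B)) y *\<^sub>R ?g y)"])
      show "(\<lambda>y. indicator K (y + a) *\<^sub>R ?g y) \<in> borel_measurable lebesgue"
        using cl by (rule meas_g2)
      show "(\<lambda>y. indicator K (y + s i) *\<^sub>R ?g y) \<in> borel_measurable lebesgue" for i
        using cl by (rule meas_g2)
      show "integrable lebesgue (\<lambda>y. norm (indicator (cball 0 (2*B)) y *\<^sub>R ?g y))"
        using B by (intro integrable_norm locint) simp
      show "AE y in lebesgue. norm (indicator K (y + s i) *\<^sub>R ?g y) \<le> norm (indicator (cball 0 (2*B)) y *\<^sub>R ?g y)" for i
        using B sK by (intro AE_I2 dom_bound) auto
      have eqN: "{y. y + a \<in> frontier K} = (+) (- a) ` frontier K"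
      proof safe
        fix y assume "y + a \<in> frontier K"
        then show "y \<in> (+) (- a) ` frontier K" by (rule rev_image_eqI) simp
      next
        fix z assume "z \<in> frontier K"
        then show "- a + z + a \<in> frontier K" by simp
      qed
      have negN: "{y. y + a \<in> frontier K} \<in> null_sets lebesgue"
        unfolding eqN negligible_iff_null_sets[symmetric]
        by (rule negligible_translation, rule negligible_convex_frontier, rule assms(2))
      show "AE y in lebesgue. (\<lambda>i. indicator K (y + s i) *\<^sub>R ?g y) \<longlonglongrightarrow> indicator K (y + a) *\<^sub>R ?g y"
      proof (rule AE_I'[OF negN], safe)
        fix y assume nl: "\<not> (\<lambda>i. indicator K (y + s i) *\<^sub>R ?g y) \<longlonglongrightarrow> indicator K (y + a) *\<^sub>R ?g y"
        have limy: "(\<lambda>i. y + s i) \<longlonglongrightarrow> y + a" by (intro tendsto_intros lim)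
        show "y + a \<in> frontier K"
        proof (rule ccontr)
          assume nf: "y + a \<notin> frontier K"
          show False
          proof (cases "y + a \<in> interior K")
            case True
            then have "eventually (\<lambda>i. y + s i \<in> interior K) sequentially"
              using topological_tendstoD[OF limy open_interior] by blast
            then have "eventually (\<lambda>i. indicator K (y + s i) *\<^sub>R ?g y = indicator K (y + a) *\<^sub>R ?g y) sequentially"
            proof eventually_elim
              case (elim i)
              then have "y + s i \<in> K" "y + a \<in> K" using True interior_subset by blast+
              then show ?case by simp
            qed
            then have "(\<lambda>i. indicator K (y + s i) *\<^sub>R ?g y) \<longlonglongrightarrow> indicator K (y + a) *\<^sub>R ?g y"
              by (rule tendsto_eventually)
            with nl show False by contradiction
          next
            case False
            then have "y + a \<notin> K" using nf cl by (simp add: frontier_def closure_closed)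
            then have "eventually (\<lambda>i. y + s i \<in> - K) sequentially"
              using topological_tendstoD[OF limy, of "- K"] cl \<open>y + a \<notin> K\<close> by (simp add: open_Compl)
            then have "eventually (\<lambda>i. indicator K (y + s i) *\<^sub>R ?g y = indicator K (y + a) *\<^sub>R ?g y) sequentially"
            proof eventually_elim
              case (elim i)
              then have "y + s i \<notin> K" by simp
              then show ?case using \<open>y + a \<notin> K\<close> by simp
            qed
            then have "(\<lambda>i. indicator K (y + s i) *\<^sub>R ?g y) \<longlonglongrightarrow> indicator K (y + a) *\<^sub>R ?g y"
              by (rule tendsto_eventually)
            with nl show False by contradiction
          qed
        qed
      qed
    qed
  qed
qed

theorem mainTheorem6:
  fixes K :: "(real ^ 'n) set"
  assumes "CARD('n) \<ge> 2"
    and "compact K" and "convex K" and "interior K \<noteq> {}"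
  shows "\<exists>x0 \<in> K.
           set_integrable lebesgue ((\<lambda>y. y - x0) ` K) (\<lambda>y. (1 / norm y ^ CARD('n)) *\<^sub>R y)
         \<and> (LINT y : (\<lambda>y. y - x0) ` K | lebesgue. (1 / norm y ^ CARD('n)) *\<^sub>R y) = 0"
proof -
  let ?g = "\<lambda>y::real^'n. (1 / norm y ^ CARD('n)) *\<^sub>R y"
  have D: "DIM(real^'n) = CARD('n)" by simp
  define F where "F x = integral\<^sup>L lebesgue (\<lambda>y. indicator K (y + x) *\<^sub>R ?g y)" for x
  have contF': "continuous_on K F" using contF[OF assms(2,3)] unfolding F_def D .
  have intF: "integrable lebesgue (\<lambda>y. indicator K (y + x) *\<^sub>R ?g y)" if "x \<in> K" for x
    using int_shift[OF assms(2) that] unfolding D .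
  have Kne: "K \<noteq> {}" using assms(4) interior_subset by blast
  have cl: "closed K" using assms(2) compact_imp_closed by auto
  have cont2: "continuous_on K (\<lambda>x. closest_point K (x + F x))"
    by (rule continuous_on_compose2[OF continuous_on_closest_point[OF assms(3) cl Kne, of UNIV]])
       (auto intro!: continuous_intros contF')
  obtain x0 where x0: "x0 \<in> K" "closest_point K (x0 + F x0) = x0"
    by (rule brouwer[OF assms(2,3) Kne cont2]) (use closest_point_in_set[OF cl Kne] in auto)
  have dotle: "F x0 \<bullet> (z - x0) \<le> 0" if "z \<in> K" for z
    using closest_point_dot[OF assms(3) cl that, of "x0 + F x0"] x0(2) by simp
  have "F x0 \<bullet> F x0 = integral\<^sup>L lebesgue (\<lambda>y. F x0 \<bullet> (indicator K (y + x0) *\<^sub>R ?g y))"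
    by (subst integral_inner_right) (use intF[OF x0(1)] in \<open>auto simp: F_def\<close>)
  also have "\<dots> = - integral\<^sup>L lebesgue (\<lambda>y. - (F x0 \<bullet> (indicator K (y + x0) *\<^sub>R ?g y)))"
    by simp
  also have "\<dots> \<le> 0"
  proof -
    have "0 \<le> integral\<^sup>L lebesgue (\<lambda>y. - (F x0 \<bullet> (indicator K (y + x0) *\<^sub>R ?g y)))"
    proof (rule integral_nonneg_AE, rule AE_I2)
      fix y
      show "0 \<le> - (F x0 \<bullet> (indicator K (y + x0) *\<^sub>R ?g y))"
      proof (cases "y + x0 \<in> K")
        case True
        have "F x0 \<bullet> y \<le> 0" using dotle[OF True] by simp
        moreover have "0 \<le> 1 / norm y ^ CARD('n)" by simp
        ultimately show ?thesis using True by (simp add: divide_nonpos_nonneg)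
      qed simp
    qed
    then show ?thesis by simp
  qed
  finally have "F x0 = 0" by (metis inner_gt_zero_iff not_le)
  have ind: "indicator ((\<lambda>y. y - x0) ` K) y = (indicator K (y + x0) :: real)" for y
  proof -
    have "y \<in> (\<lambda>y. y - x0) ` K \<longleftrightarrow> y + x0 \<in> K"
    proof
      assume "y + x0 \<in> K" then show "y \<in> (\<lambda>y. y - x0) ` K" by (rule rev_image_eqI) simp
    qed auto
    then show ?thesis by (simp add: indicator_def)
  qed
  show ?thesis
  proof (intro bexI[OF _ x0(1)] conjI)
    show "set_integrable lebesgue ((\<lambda>y. y - x0) ` K) ?g"
      unfolding set_integrable_def ind using intF[OF x0(1)] .
    show "(LINT y : (\<lambda>y. y - x0) ` K | lebesgue. ?g y) = 0"
      unfolding set_lebesgue_integral_def ind using \<open>F x0 = 0\<close> by (simp add: F_def)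
  qed
qed

end
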